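(* Let $Q$ be a $G$-admissible quiver, with extended exchange matrix $\tilde B=\tilde B(Q)$. Let $K$ be a mutable $G$-orbit such that the quiver $\mu_K(Q)$ is also $G$-admissible. Then $(\mu_K(\tilde B))^G=\mu_K(\tilde B^G)$, where on the left $\mu_K=\prod_{k\in K}\mu_k$ is the composition of the mutations of $\tilde B$ at all indices of $K$, and on the right $\mu_K$ is the single matrix mutation of $\tilde B^G$ at the index $K$.
   Context: $Q$ is a quiver (no loops, no oriented 2-cycles) with vertices $1,\dots,m$, where $1,\dots,n$ are mutable and $n+1,\dots,m$ frozen (there are no arrows between frozen vertices). Its extended exchange matrix $\tilde B(Q)=(b_{ij})$ is the $m\times n$ matrix with $b_{ij}$ = (number of arrows $i\to j$) $-$ (number of arrows $j\to i$). Matrix mutation at mutable $k$: $b'_{ij}=-b_{ij}$ if $k\in\{i,j\}$, and $b'_{ij}=b_{ij}+\mathrm{sgn}(b_{ik})\max(b_{ik}b_{kj},0)$ otherwise; quiver mutation $\mu_k$ corresponds to this. A group $G$ acts on $\{1,\dots,m\}$; write $i\sim i'$ if $i,i'$ lie in the same $G$-orbit. $Q$ (or $\tilde B(Q)$) is $G$-admissible if: (1) for $i\sim i'$, $i$ is mutable iff $i'$ is; (2) $b_{ij}=b_{g(i),g(j)}$ for all $i,j$ and $g\in G$; (3) $b_{ii'}=0$ for mutable $i\sim i'$; (4) $b_{ij}b_{i'j}\ge0$ for $i\sim i'$ and mutable $j$. For $G$-admissible $Q$, orbits are mutable or frozen, and $\tilde B^G=(b^G_{IJ})$ is the matrix with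 rows indexed by $G$-orbits and columns by mutable $G$-orbits, $b^G_{IJ}=\sum_{i\in I}b_{ij}$ for any $j\in J$. By condition (3), the mutations $\mu_k$, $k\in K$, commute, so $\mu_K$ is well defined. *)

theory Defs
  imports "HOL-Algebra.Group_Action"
begin

text \<open>Vertices are 1..m; 1..n are mutable, n+1..m frozen.
  A quiver is given by its arrow-count function arr i j = number of arrows i to j.\<close>

definition is_quiver :: "nat \<Rightarrow> nat \<Rightarrow> (nat \<Rightarrow> nat \<Rightarrow> nat) \<Rightarrow> bool" where
  "is_quiver m n arr \<longleftrightarrow> n \<le> m \<and>
     (\<forall>i\<in>{1..m}. arr i i = 0) \<and>
     (\<forall>i\<in>{1..m}. \<forall>j\<in>{1..m}. arr i j = 0 \<or> arr j i = 0) \<and>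
     (\<forall>i\<in>{n<..m}. \<forall>j\<in>{n<..m}. arr i j = 0)"

text \<open>Extended exchange matrix: rows 1..m, columns 1..n (entries outside are irrelevant).\<close>
definition exmat :: "(nat \<Rightarrow> nat \<Rightarrow> nat) \<Rightarrow> nat \<Rightarrow> nat \<Rightarrow> int" where
  "exmat arr i j = int (arr i j) - int (arr j i)"

text \<open>Matrix mutation at index k (generic index type, used both for vertices and orbits).\<close>
definition mut :: "'i \<Rightarrow> ('i \<Rightarrow> 'i \<Rightarrow> int) \<Rightarrow> 'i \<Rightarrow> 'i \<Rightarrow> int" where
  "mut k B i j = (if i = k \<or> j = k then - B i j
                  else B i j + sgn (B i k) * max (B i k * B k j) 0)"

definition mutK :: "nat set \<Rightarrow> (nat \<Rightarrow> nat \<Rightarrow> int) \<Rightarrow> nat \<Rightarrow> nat \<Rightarrow> int" where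
  "mutK K B = fold mut (sorted_list_of_set K) B"

definition G_admissible ::
  "('a, 'c) monoid_scheme \<Rightarrow> ('a \<Rightarrow> nat \<Rightarrow> nat) \<Rightarrow> nat \<Rightarrow> nat \<Rightarrow> (nat \<Rightarrow> nat \<Rightarrow> int) \<Rightarrow> bool" where
  "G_admissible G \<phi> m n B \<longleftrightarrow>
     (\<forall>i\<in>{1..m}. \<forall>i'\<in>orbit G \<phi> i. (i \<le> n \<longleftrightarrow> i' \<le> n)) \<and>
     (\<forall>i\<in>{1..m}. \<forall>j\<in>{1..n}. \<forall>g\<in>carrier G. B i j = B (\<phi> g i) (\<phi> g j)) \<and>
     (\<forall>i\<in>{1..n}. \<forall>i'\<in>orbit G \<phi> i. B i i' = 0) \<and>
     (\<forall>i\<in>{1..m}. \<forall>i'\<in>orbit G \<phi> i. \<forall>j\<in>{1..n}. B i j * B i' j \<ge> 0)"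

text \<open>The orbit matrix B^G: b^G_{IJ} = sum over i in I of b_{ij} for (any) j in J.\<close>
definition orbmat :: "(nat \<Rightarrow> nat \<Rightarrow> int) \<Rightarrow> nat set \<Rightarrow> nat set \<Rightarrow> int" where
  "orbmat B I J = (\<Sum>i\<in>I. B i (SOME j. j \<in> J))"

end

theory Submission
  imports Defs
begin

definition ff :: "int \<Rightarrow> int \<Rightarrow> int" where
  "ff x y = sgn x * max (x * y) 0"

lemma mut_fold_formula:
  assumes "distinct xs" "\<forall>k\<in>set xs. \<forall>k'\<in>set xs. B k k' = 0"
  shows "fold mut xs B i j = (if i \<in> set xs \<or> j \<in> set xs then - B i j
           else B i j + (\<Sum>k\<in>set xs. ff (B i k) (B k j)))"
  using assms
proof (induction xs arbitrary: B i j)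
  case Nil
  then show ?case by simp
next
  case (Cons x xs)
  define B' where "B' = mut x B"
  have z: "\<And>k k'. k \<in> set (x#xs) \<Longrightarrow> k' \<in> set (x#xs) \<Longrightarrow> B k k' = 0" using Cons.prems by blast
  have c1: "\<And>i k. k \<in> set xs \<Longrightarrow> B' i k = B i k"
    using Cons.prems(1) z unfolding B'_def mut_def by auto
  have c2: "\<And>j k. k \<in> set xs \<Longrightarrow> B' k j = B k j"
    using Cons.prems(1) z unfolding B'_def mut_def by auto
  have z': "\<forall>k\<in>set xs. \<forall>k'\<in>set xs. B' k k' = 0" using c1 z by auto
  have IH: "fold mut xs B' i j = (if i \<in> set xs \<or> j \<in> set xs then - B' i j
           else B' i j + (\<Sum>k\<in>set xs. ff (B' i k) (B' k j)))"
    using Cons.IH[OF _ z'] Cons.prems(1) by auto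
  have sumeq: "(\<Sum>k\<in>set xs. ff (B' i k) (B' k j)) = (\<Sum>k\<in>set xs. ff (B i k) (B k j))"
    using c1 c2 by (intro sum.cong) auto
  have lhs: "fold mut (x#xs) B i j = fold mut xs B' i j" by (simp add: B'_def)
  show ?case
  proof (cases "i \<in> set xs \<or> j \<in> set xs")
    case True
    have "B' i j = B i j"
    proof (cases "i \<in> set xs")
      case True
      then show ?thesis using z[of i x] z[of x j] Cons.prems(1) unfolding B'_def mut_def by (auto simp: ff_def)
    next
      case False
      then have "j \<in> set xs" using \<open>i \<in> set xs \<or> j \<in> set xs\<close> by simp
      then show ?thesis using z[of i x] z[of x j] z[of j x] Cons.prems(1) unfolding B'_def mut_def by (auto simp: ff_def)
    qed
    then show ?thesis using lhs IH True by auto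
  next
    case False
    note F = False
    show ?thesis
    proof (cases "i = x \<or> j = x")
      case True
      have "(\<Sum>k\<in>set xs. ff (B i k) (B k j)) = 0"
        using True z by (intro sum.neutral) (auto simp: ff_def)
      moreover have "B' i j = - B i j" using True unfolding B'_def mut_def by auto
      moreover have "(\<Sum>k\<in>set (x#xs). ff (B i k) (B k j)) = ff (B i x) (B x j) + (\<Sum>k\<in>set xs. ff (B i k) (B k j))"
        using Cons.prems(1) by simp
      ultimately show ?thesis using lhs IH F True sumeq by auto
    next
      case False
      have "B' i j = B i j + ff (B i x) (B x j)" using False unfolding B'_def mut_def ff_def by auto
      moreover have "(\<Sum>k\<in>set (x#xs). ff (B i k) (B k j)) = ff (B i x) (B x j) + (\<Sum>k\<in>set xs. ff (B i k) (B k j))"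
        using Cons.prems(1) by simp
      ultimately show ?thesis using lhs IH F False sumeq by simp
    qed
  qed
qed

lemma mutK_formula:
  assumes "finite K" "\<forall>k\<in>K. \<forall>k'\<in>K. B k k' = 0"
  shows "mutK K B i j = (if i \<in> K \<or> j \<in> K then - B i j
           else B i j + (\<Sum>k\<in>K. ff (B i k) (B k j)))"
  unfolding mutK_def using mut_fold_formula[of "sorted_list_of_set K" B i j] assms by simp

lemma common_sign:
  assumes "\<forall>a\<in>S. \<forall>b\<in>S. (x a :: int) * x b \<ge> 0"
  shows "(\<forall>a\<in>S. x a \<ge> 0) \<or> (\<forall>a\<in>S. x a \<le> 0)"
proof (rule ccontr)
  assume "\<not> ?thesis"
  then obtain a b where "a \<in> S" "b \<in> S" "x a < 0" "x b > 0" by force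
  then have "x a * x b < 0" by (simp add: mult_neg_pos)
  then show False using assms \<open>a \<in> S\<close> \<open>b \<in> S\<close> by force
qed

lemma ff_pos: "x \<ge> 0 \<Longrightarrow> ff x y = x * max y 0"
  unfolding ff_def by (cases "x = 0") (auto simp: max_def mult_le_0_iff zero_le_mult_iff)

lemma ff_neg: "x \<le> 0 \<Longrightarrow> ff x y = x * max (- y) 0"
  unfolding ff_def by (cases "x = 0") (auto simp: max_def mult_le_0_iff zero_le_mult_iff)

lemma sum_ff_left:
  assumes "\<forall>a\<in>S. \<forall>b\<in>S. (x a :: int) * x b \<ge> 0"
  shows "(\<Sum>a\<in>S. ff (x a) y) = ff (\<Sum>a\<in>S. x a) y"
  using common_sign[OF assms]
proof
  assume h: "\<forall>a\<in>S. x a \<ge> 0"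
  then have "(\<Sum>a\<in>S. ff (x a) y) = (\<Sum>a\<in>S. x a * max y 0)" by (intro sum.cong) (auto simp: ff_pos)
  also have "\<dots> = (\<Sum>a\<in>S. x a) * max y 0" by (simp add: sum_distrib_right)
  also have "\<dots> = ff (\<Sum>a\<in>S. x a) y" using h by (simp add: ff_pos sum_nonneg)
  finally show ?thesis .
next
  assume h: "\<forall>a\<in>S. x a \<le> 0"
  then have "(\<Sum>a\<in>S. ff (x a) y) = (\<Sum>a\<in>S. x a * max (-y) 0)" by (intro sum.cong) (auto simp: ff_neg)
  also have "\<dots> = (\<Sum>a\<in>S. x a) * max (-y) 0" by (simp add: sum_distrib_right)
  also have "\<dots> = ff (\<Sum>a\<in>S. x a) y" using h by (simp add: ff_neg sum_nonpos)
  finally show ?thesis .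
qed

lemma sum_max0:
  assumes "\<forall>a\<in>S. \<forall>b\<in>S. (z a :: int) * z b \<ge> 0"
  shows "(\<Sum>a\<in>S. max (z a) 0) = max (\<Sum>a\<in>S. z a) 0"
  using common_sign[OF assms]
proof
  assume h: "\<forall>a\<in>S. z a \<ge> 0"
  then have "(\<Sum>a\<in>S. max (z a) 0) = (\<Sum>a\<in>S. z a)" by (intro sum.cong) auto
  then show ?thesis using h by (simp add: sum_nonneg)
next
  assume h: "\<forall>a\<in>S. z a \<le> 0"
  then have "(\<Sum>a\<in>S. max (z a) 0) = 0" by (intro sum.neutral) (auto simp: max_def)
  then show ?thesis using h by (simp add: sum_nonpos max_def)
qed

lemma sum_ff_right:
  assumes "\<forall>a\<in>S. \<forall>b\<in>S. (y a :: int) * y b \<ge> 0"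
  shows "(\<Sum>a\<in>S. ff c (y a)) = ff c (\<Sum>a\<in>S. y a)"
proof -
  have "\<forall>a\<in>S. \<forall>b\<in>S. (c * y a) * (c * y b) \<ge> 0"
  proof (intro ballI)
    fix a b assume "a \<in> S" "b \<in> S"
    then have "y a * y b \<ge> 0" using assms by blast
    then have "(c*c) * (y a * y b) \<ge> 0" by simp
    then show "(c * y a) * (c * y b) \<ge> 0" by (simp add: algebra_simps)
  qed
  then have "(\<Sum>a\<in>S. max (c * y a) 0) = max (\<Sum>a\<in>S. c * y a) 0" by (rule sum_max0)
  then show ?thesis unfolding ff_def by (simp add: sum_distrib_left[symmetric])
qed

theorem lemma4p4p5:
  fixes G :: "('a, 'c) monoid_scheme" and \<phi> :: "'a \<Rightarrow> nat \<Rightarrow> nat"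
    and arr :: "nat \<Rightarrow> nat \<Rightarrow> nat" and m n :: nat and K :: "nat set"
  assumes "is_quiver m n arr"
    and "group_action G {1..m} \<phi>"
    and "G_admissible G \<phi> m n (exmat arr)"
    and "K \<in> orbits G {1..n} \<phi>"
    and "G_admissible G \<phi> m n (mutK K (exmat arr))"
  shows "\<forall>I\<in>orbits G {1..m} \<phi>. \<forall>J\<in>orbits G {1..n} \<phi>.
           orbmat (mutK K (exmat arr)) I J = mut K (orbmat (exmat arr)) I J"
proof (intro ballI)
  fix I J assume I: "I \<in> orbits G {1..m} \<phi>" and J: "J \<in> orbits G {1..n} \<phi>"
  define B where "B = exmat arr"
  interpret ga: group_action G "{1..m}" \<phi> by (rule assms(2))
  have nm: "n \<le> m" using assms(1) unfolding is_quiver_def by simp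
  have A1: "\<And>i i'. i \<in> {1..m} \<Longrightarrow> i' \<in> orbit G \<phi> i \<Longrightarrow> (i \<le> n \<longleftrightarrow> i' \<le> n)"
    and A2: "\<And>i j g. i \<in> {1..m} \<Longrightarrow> j \<in> {1..n} \<Longrightarrow> g \<in> carrier G \<Longrightarrow> B i j = B (\<phi> g i) (\<phi> g j)"
    and A3: "\<And>i i'. i \<in> {1..n} \<Longrightarrow> i' \<in> orbit G \<phi> i \<Longrightarrow> B i i' = 0"
    and A4: "\<And>i i' j. i \<in> {1..m} \<Longrightarrow> i' \<in> orbit G \<phi> i \<Longrightarrow> j \<in> {1..n} \<Longrightarrow> B i j * B i' j \<ge> 0"
    using assms(3) unfolding G_admissible_def B_def by blast+
  have orb_sub: "\<And>x. x \<in> {1..m} \<Longrightarrow> orbit G \<phi> x \<subseteq> {1..m}"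
    unfolding orbit_def using ga.element_image by blast
  have orbn: "\<And>x. x \<in> {1..n} \<Longrightarrow> orbit G \<phi> x \<subseteq> {1..n}"
  proof
    fix x y assume x: "x \<in> {1..n}" and y: "y \<in> orbit G \<phi> x"
    have xm: "x \<in> {1..m}" using x nm by auto
    then have "y \<in> {1..m}" using orb_sub y by blast
    moreover have "y \<le> n" using A1[OF xm y] x by simp
    ultimately show "y \<in> {1..n}" by simp
  qed
  have orbs_nm: "\<And>X. X \<in> orbits G {1..n} \<phi> \<Longrightarrow> X \<in> orbits G {1..m} \<phi>"
    unfolding orbits_def using nm by fastforce
  obtain k1 where k1: "k1 \<in> {1..n}" "K = orbit G \<phi> k1" using assms(4) unfolding orbits_def by blast
  obtain j1 where j1: "j1 \<in> {1..n}" "J = orbit G \<phi> j1" using J unfolding orbits_def by blast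
  obtain i1 where i1: "i1 \<in> {1..m}" "I = orbit G \<phi> i1" using I unfolding orbits_def by blast
  have Kn: "K \<subseteq> {1..n}" using orbn k1 by blast
  have Jn: "J \<subseteq> {1..n}" using orbn j1 by blast
  have Im: "I \<subseteq> {1..m}" using orb_sub i1 by blast
  have finK: "finite K" using Kn finite_subset by blast
  have finI: "finite I" using Im finite_subset by blast
  have k1m: "k1 \<in> {1..m}" using k1 nm by auto
  have j1m: "j1 \<in> {1..m}" using j1 nm by auto
  have same: "\<And>x a b. x \<in> {1..m} \<Longrightarrow> a \<in> orbit G \<phi> x \<Longrightarrow> b \<in> orbit G \<phi> x \<Longrightarrow> b \<in> orbit G \<phi> a"
  proof -
    fix x a b assume x: "x \<in> {1..m}" and a: "a \<in> orbit G \<phi> x" and b: "b \<in> orbit G \<phi> x"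
    have am: "a \<in> {1..m}" and bm: "b \<in> {1..m}" using orb_sub x a b by blast+
    have "x \<in> orbit G \<phi> a" using ga.orbit_sym[OF x am a] .
    then show "b \<in> orbit G \<phi> a" using ga.orbit_trans[OF am x bm _ b] by simp
  qed
  have Kz: "\<forall>k\<in>K. \<forall>k'\<in>K. B k k' = 0"
  proof (intro ballI)
    fix k k' assume "k \<in> K" "k' \<in> K"
    then have "k' \<in> orbit G \<phi> k" using same[OF k1m] k1 by blast
    then show "B k k' = 0" using A3 \<open>k \<in> K\<close> Kn by blast
  qed
  have MF: "\<And>i j. mutK K B i j = (if i \<in> K \<or> j \<in> K then - B i j
           else B i j + (\<Sum>k\<in>K. ff (B i k) (B k j)))"
    using mutK_formula[OF finK Kz] by blast
  define j0 where "j0 = (SOME j. j \<in> J)"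
  have "j1 \<in> J" using j1 ga.orbit_refl[OF j1m] by simp
  then have j0J: "j0 \<in> J" unfolding j0_def by (rule someI)
  define k0 where "k0 = (SOME k. k \<in> K)"
  have "k1 \<in> K" using k1 ga.orbit_refl[OF k1m] by simp
  then have k0K: "k0 \<in> K" unfolding k0_def by (rule someI)
  have lhs: "orbmat (mutK K B) I J = (\<Sum>i\<in>I. mutK K B i j0)"
    unfolding orbmat_def j0_def ..
  have oIJ: "orbmat B I J = (\<Sum>i\<in>I. B i j0)" unfolding orbmat_def j0_def ..
  have oIK: "orbmat B I K = (\<Sum>i\<in>I. B i k0)" unfolding orbmat_def k0_def ..
  have oKJ: "orbmat B K J = (\<Sum>k\<in>K. B k j0)" unfolding orbmat_def j0_def ..
  have Km: "K \<in> orbits G {1..m} \<phi>" using orbs_nm assms(4) .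
  have Jm: "J \<in> orbits G {1..m} \<phi>" using orbs_nm J .
  show "orbmat (mutK K (exmat arr)) I J = mut K (orbmat (exmat arr)) I J"
    unfolding B_def[symmetric]
  proof (cases "I = K \<or> J = K")
    case True
    have "(\<Sum>i\<in>I. mutK K B i j0) = (\<Sum>i\<in>I. - B i j0)"
      using True j0J by (intro sum.cong) (auto simp: MF)
    then show "orbmat (mutK K B) I J = mut K (orbmat B) I J"
      using True lhs oIJ unfolding mut_def by (simp add: sum_negf)
  next
    case False
    have IK: "I \<inter> K = {}" using ga.disjoint_union[OF I Km] False by blast
    have JK: "J \<inter> K = {}" using ga.disjoint_union[OF Jm Km] False by blast
    have j0K: "j0 \<notin> K" using JK j0J by blast
    have j0n: "j0 \<in> {1..n}" using Jn j0J by blast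
    have csum: "\<And>k. k \<in> K \<Longrightarrow> (\<Sum>i\<in>I. B i k) = (\<Sum>i\<in>I. B i k0)"
    proof -
      fix k assume kK: "k \<in> K"
      have "k \<in> orbit G \<phi> k0" using same[OF k1m] k1 kK k0K by blast
      then obtain g where g: "g \<in> carrier G" "\<phi> g k0 = k" unfolding orbit_def by blast
      have img: "\<phi> g ` I \<subseteq> I"
      proof
        fix y assume "y \<in> \<phi> g ` I"
        then obtain x where x: "x \<in> I" "y = \<phi> g x" by blast
        have xm: "x \<in> {1..m}" using Im x by blast
        have "y \<in> orbit G \<phi> x" unfolding orbit_def using g x by blast
        moreover have "y \<in> {1..m}" using ga.element_image[OF g(1) xm] x by simp
        ultimately show "y \<in> I" using ga.orbit_trans[OF i1(1) xm] i1 x by blast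
      qed
      have inj: "inj_on (\<phi> g) I" using ga.inj_prop[OF g(1)] Im inj_on_subset by blast
      have eqI: "\<phi> g ` I = I" using endo_inj_surj[OF finI img inj] .
      have "(\<Sum>i\<in>I. B i k) = (\<Sum>i\<in>\<phi> g ` I. B i k)" using eqI by simp
      also have "\<dots> = (\<Sum>i\<in>I. B (\<phi> g i) (\<phi> g k0))" using sum.reindex[OF inj] g by simp
      also have "\<dots> = (\<Sum>i\<in>I. B i k0)"
      proof (intro sum.cong refl)
        fix x assume "x \<in> I"
        have "x \<in> {1..m}" "k0 \<in> {1..n}" using \<open>x \<in> I\<close> Im k0K Kn by blast+
        then show "B (\<phi> g x) (\<phi> g k0) = B x k0" using A2[of x k0 g] g by simp
      qed
      finally show "(\<Sum>i\<in>I. B i k) = (\<Sum>i\<in>I. B i k0)" .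
    qed
    have signI: "\<And>k. k \<in> K \<Longrightarrow> \<forall>a\<in>I. \<forall>b\<in>I. B a k * B b k \<ge> 0"
    proof (intro ballI)
      fix k a b assume "k \<in> K" "a \<in> I" "b \<in> I"
      then show "B a k * B b k \<ge> 0" using A4[of a b k] same[OF i1(1)] i1 Im Kn by blast
    qed
    have signK: "\<forall>a\<in>K. \<forall>b\<in>K. B a j0 * B b j0 \<ge> 0"
    proof (intro ballI)
      fix a b assume "a \<in> K" "b \<in> K"
      then show "B a j0 * B b j0 \<ge> 0" using A4[of a b j0] same[OF k1m] k1 Kn j0n nm by auto
    qed
    have "(\<Sum>i\<in>I. mutK K B i j0) = (\<Sum>i\<in>I. B i j0 + (\<Sum>k\<in>K. ff (B i k) (B k j0)))"
      using IK j0K by (intro sum.cong) (auto simp: MF)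
    also have "\<dots> = (\<Sum>i\<in>I. B i j0) + (\<Sum>k\<in>K. \<Sum>i\<in>I. ff (B i k) (B k j0))"
      by (simp add: sum.distrib sum.swap[of _ I K])
    also have "(\<Sum>k\<in>K. \<Sum>i\<in>I. ff (B i k) (B k j0)) = (\<Sum>k\<in>K. ff (\<Sum>i\<in>I. B i k0) (B k j0))"
    proof (intro sum.cong refl)
      fix k assume "k \<in> K"
      then show "(\<Sum>i\<in>I. ff (B i k) (B k j0)) = ff (\<Sum>i\<in>I. B i k0) (B k j0)"
        using sum_ff_left[OF signI] csum by simp
    qed
    also have "\<dots> = ff (\<Sum>i\<in>I. B i k0) (\<Sum>k\<in>K. B k j0)"
      by (rule sum_ff_right[OF signK])
    finally show "orbmat (mutK K B) I J = mut K (orbmat B) I J"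
      using lhs oIJ oIK oKJ False unfolding mut_def ff_def by simp
  qed
qed

end
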